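(* Let $R$ be an exchange ring in which $2$ is invertible, and let $a\in R$ be such that $a-a^3$ is regular. If the right $R$-modules $aR/ar(a^2)$ and $R/\big(aR+r(a)\big)$ are projective, then $(a-a^3)R\oplus ar(a^2)\cong (a-a^3)R\oplus R/\big(aR+r(a)\big)$ as right $R$-modules.
   Context: All rings are associative with identity; modules are right modules. An element $x\in R$ is regular if $x=xyx$ for some $y\in R$. $R$ is an exchange ring if for every $x\in R$ there is an idempotent $e\in xR$ with $1-e\in(1-x)R$. For $x\in R$, $r(x)=\{y\in R: xy=0\}$, and $ar(a^2)=\{ay: y\in r(a^2)\}$. *)

theory Defs
  imports Main
begin

text \<open>Rings: the whole type 'a, class {ring, monoid_mult} (associative, with identity;
 the zero ring is not excluded). Right modules are explicit records.\<close>

definition regular :: "'a::{ring,monoid_mult} \<Rightarrow> bool" where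
  "regular x \<longleftrightarrow> (\<exists>y. x = x * y * x)"

definition exchange_ring :: "'a::{ring,monoid_mult} itself \<Rightarrow> bool" where
  "exchange_ring _ \<longleftrightarrow> (\<forall>x::'a. \<exists>e. e * e = e \<and> e \<in> range ((*) x) \<and> 1 - e \<in> range ((*) (1 - x)))"

definition rann :: "'a::{ring,monoid_mult} \<Rightarrow> 'a set" where
  "rann x = {y. x * y = 0}"

definition a_rann_sq :: "'a::{ring,monoid_mult} \<Rightarrow> 'a set" where
  "a_rann_sq a = (\<lambda>y. a * y) ` rann (a * a)"

definition set_plus_r :: "'a::{ring,monoid_mult} set \<Rightarrow> 'a set \<Rightarrow> 'a set" where
  "set_plus_r A B = {u + v | u v. u \<in> A \<and> v \<in> B}"

record ('a, 'm) rmod =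
  rm_carrier :: "'m set"
  rm_add :: "'m \<Rightarrow> 'm \<Rightarrow> 'm"
  rm_zero :: "'m"
  rm_smul :: "'m \<Rightarrow> 'a \<Rightarrow> 'm"

definition rmodule :: "('a::{ring,monoid_mult}, 'm) rmod \<Rightarrow> bool" where
  "rmodule M \<longleftrightarrow>
     rm_zero M \<in> rm_carrier M \<and>
     (\<forall>x\<in>rm_carrier M. \<forall>y\<in>rm_carrier M. rm_add M x y \<in> rm_carrier M) \<and>
     (\<forall>x\<in>rm_carrier M. \<forall>r. rm_smul M x r \<in> rm_carrier M) \<and>
     (\<forall>x\<in>rm_carrier M. \<forall>y\<in>rm_carrier M. \<forall>z\<in>rm_carrier M.
        rm_add M (rm_add M x y) z = rm_add M x (rm_add M y z)) \<and>
     (\<forall>x\<in>rm_carrier M. \<forall>y\<in>rm_carrier M. rm_add M x y = rm_add M y x) \<and>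
     (\<forall>x\<in>rm_carrier M. rm_add M (rm_zero M) x = x) \<and>
     (\<forall>x\<in>rm_carrier M. \<exists>y\<in>rm_carrier M. rm_add M x y = rm_zero M) \<and>
     (\<forall>x\<in>rm_carrier M. \<forall>r s. rm_smul M x (r + s) = rm_add M (rm_smul M x r) (rm_smul M x s)) \<and>
     (\<forall>x\<in>rm_carrier M. \<forall>y\<in>rm_carrier M. \<forall>r.
        rm_smul M (rm_add M x y) r = rm_add M (rm_smul M x r) (rm_smul M y r)) \<and>
     (\<forall>x\<in>rm_carrier M. \<forall>r s. rm_smul M x (r * s) = rm_smul M (rm_smul M x r) s) \<and>
     (\<forall>x\<in>rm_carrier M. rm_smul M x 1 = x)"

definition rlinear :: "('a::{ring,monoid_mult}, 'm) rmod \<Rightarrow> ('a, 'n) rmod \<Rightarrow> ('m \<Rightarrow> 'n) \<Rightarrow> bool" where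
  "rlinear M N f \<longleftrightarrow>
     (\<forall>x\<in>rm_carrier M. f x \<in> rm_carrier N) \<and>
     (\<forall>x\<in>rm_carrier M. \<forall>y\<in>rm_carrier M. f (rm_add M x y) = rm_add N (f x) (f y)) \<and>
     (\<forall>x\<in>rm_carrier M. \<forall>r. f (rm_smul M x r) = rm_smul N (f x) r)"

definition riso :: "('a::{ring,monoid_mult}, 'm) rmod \<Rightarrow> ('a, 'n) rmod \<Rightarrow> bool" where
  "riso M N \<longleftrightarrow> (\<exists>f. rlinear M N f \<and> bij_betw f (rm_carrier M) (rm_carrier N))"

text \<open>Domains range over
 modules whose carrier lives in type 'm => 'a, large enough to contain the free module
 on the carrier of M, so this is equivalent to the usual notion.\<close>
definition rprojective :: "('a::{ring,monoid_mult}, 'm) rmod \<Rightarrow> bool" where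
  "rprojective M \<longleftrightarrow> rmodule M \<and>
     (\<forall>(N :: ('a, 'm \<Rightarrow> 'a) rmod) g.
        rmodule N \<and> rlinear N M g \<and> g ` rm_carrier N = rm_carrier M \<longrightarrow>
        (\<exists>h. rlinear M N h \<and> (\<forall>x\<in>rm_carrier M. g (h x) = x)))"

definition submod :: "'a::{ring,monoid_mult} set \<Rightarrow> ('a, 'a) rmod" where
  "submod I = \<lparr> rm_carrier = I, rm_add = (+), rm_zero = 0, rm_smul = (*) \<rparr>"

text \<open>Quotient I/J (J \<subseteq> I right ideals): elements are cosets x + J, x in I.\<close>
definition quotmod :: "'a::{ring,monoid_mult} set \<Rightarrow> 'a set \<Rightarrow> ('a, 'a set) rmod" where
  "quotmod I J = \<lparr> rm_carrier = (\<lambda>x. (\<lambda>j. x + j) ` J) ` I,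
                   rm_add = (\<lambda>A B. {x + y | x y. x \<in> A \<and> y \<in> B}),
                   rm_zero = J,
                   rm_smul = (\<lambda>A r. {y * r + j | y j. y \<in> A \<and> j \<in> J}) \<rparr>"

definition dsum :: "('a, 'm) rmod \<Rightarrow> ('a, 'n) rmod \<Rightarrow> ('a, 'm \<times> 'n) rmod" where
  "dsum M N = \<lparr> rm_carrier = rm_carrier M \<times> rm_carrier N,
                rm_add = (\<lambda>(x1, y1) (x2, y2). (rm_add M x1 x2, rm_add N y1 y2)),
                rm_zero = (rm_zero M, rm_zero N),
                rm_smul = (\<lambda>(x, y) r. (rm_smul M x r, rm_smul N y r)) \<rparr>"

end

theory Submission
  imports Defs
begin


definition inJ :: "'a::{ring,monoid_mult} \<Rightarrow> 'a \<Rightarrow> bool" where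
  "inJ a x \<longleftrightarrow> (\<exists>p q. x = a * p + q \<and> a * q = 0)"

lemma J_char: "set_plus_r (range ((*) a)) (rann a) = {x. inJ a x}"
  unfolding set_plus_r_def rann_def inJ_def by auto

lemma inJ_add: "inJ a x \<Longrightarrow> inJ a y \<Longrightarrow> inJ a (x + y)"
  unfolding inJ_def
proof (elim exE conjE)
  fix p q p' q' assume "x = a*p+q" "a*q=0" "y = a*p'+q'" "a*q'=0"
  then show "\<exists>p q. x + y = a * p + q \<and> a * q = 0"
    by (intro exI[of _ "p+p'"] exI[of _ "q+q'"]) (simp add: algebra_simps)
qed

lemma inJ_neg: "inJ a x \<Longrightarrow> inJ a (- x)"
  unfolding inJ_def
proof (elim exE conjE)
  fix p q assume "x = a*p+q" "a*q=0"
  then show "\<exists>p' q'. - x = a * p' + q' \<and> a * q' = 0"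
    by (intro exI[of _ "-p"] exI[of _ "-q"]) (simp add: algebra_simps)
qed

lemma inJ_diff: "inJ a x \<Longrightarrow> inJ a y \<Longrightarrow> inJ a (x - y)"
  using inJ_add[of a x "-y"] inJ_neg[of a y] by simp

lemma inJ_mult: "inJ a x \<Longrightarrow> inJ a (x * r)"
  unfolding inJ_def
proof (elim exE conjE)
  fix p q assume "x = a*p+q" "a*q=0"
  show "\<exists>p' q'. x * r = a * p' + q' \<and> a * q' = 0"
  proof (rule exI[of _ "p*r"], rule exI[of _ "q*r"], rule conjI)
    show "x * r = a * (p * r) + q * r" using \<open>x = a*p+q\<close> by (simp add: distrib_right mult.assoc)
    show "a * (q * r) = 0" using \<open>a*q=0\<close> by (simp add: mult.assoc[symmetric])
  qed
qed

lemma inJ_aR: "inJ a (a * p)" unfolding inJ_def by (intro exI[of _ p] exI[of _ 0]) simp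
lemma inJ_ann: "a * q = 0 \<Longrightarrow> inJ a q" unfolding inJ_def by (intro exI[of _ 0] exI[of _ q]) simp
lemma inJ_0: "inJ a 0" using inJ_ann[of a 0] by simp

definition cos :: "'a::{ring,monoid_mult} \<Rightarrow> 'a \<Rightarrow> 'a set" where
  "cos a x = (\<lambda>j. x + j) ` {j. inJ a j}"

lemma cos_eq: "cos a x = cos a y \<longleftrightarrow> inJ a (x - y)"
proof
  assume h: "cos a x = cos a y"
  have "x \<in> cos a x" unfolding cos_def using inJ_0[of a] by (auto intro: image_eqI[of _ _ 0])
  then have "x \<in> cos a y" using h by simp
  then obtain j where "inJ a j" "x = y + j" unfolding cos_def by auto
  then show "inJ a (x - y)" by simp
next
  assume h: "inJ a (x - y)"
  show "cos a x = cos a y"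
  proof
    show "cos a x \<subseteq> cos a y" unfolding cos_def
    proof
      fix z assume "z \<in> (\<lambda>j. x + j) ` {j. inJ a j}"
      then obtain j where j: "inJ a j" "z = x + j" by auto
      then have "inJ a ((x - y) + j)" using h inJ_add by blast
      moreover have "z = y + ((x - y) + j)" using j by (simp add: algebra_simps)
      ultimately show "z \<in> (\<lambda>j. y + j) ` {j. inJ a j}" by (intro image_eqI[of _ _ "(x - y) + j"]) auto
    qed
    show "cos a y \<subseteq> cos a x" unfolding cos_def
    proof
      fix z assume "z \<in> (\<lambda>j. y + j) ` {j. inJ a j}"
      then obtain j where j: "inJ a j" "z = y + j" by auto
      then have "inJ a (j - (x - y))" using h inJ_diff by blast
      moreover have "z = x + (j - (x - y))" using j by (simp add: algebra_simps)
      ultimately show "z \<in> (\<lambda>j. x + j) ` {j. inJ a j}" by (intro image_eqI[of _ _ "j - (x - y)"]) auto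
    qed
  qed
qed

lemma cos_add: "{p + q | p q. p \<in> cos a x \<and> q \<in> cos a y} = cos a (x + y)"
proof
  show "{p + q | p q. p \<in> cos a x \<and> q \<in> cos a y} \<subseteq> cos a (x + y)"
  proof
    fix z assume "z \<in> {p + q | p q. p \<in> cos a x \<and> q \<in> cos a y}"
    then obtain j k where "inJ a j" "inJ a k" "z = (x + j) + (y + k)" unfolding cos_def by auto
    then show "z \<in> cos a (x + y)" unfolding cos_def using inJ_add[of a j k]
      by (auto simp: algebra_simps intro!: image_eqI[of _ _ "j + k"])
  qed
  show "cos a (x + y) \<subseteq> {p + q | p q. p \<in> cos a x \<and> q \<in> cos a y}"
  proof
    fix z assume "z \<in> cos a (x + y)"
    then obtain j where j: "inJ a j" "z = x + y + j" unfolding cos_def by auto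
    have "x + j \<in> cos a x" "y \<in> cos a y" unfolding cos_def using j inJ_0[of a]
      by (auto intro: image_eqI[of _ _ 0])
    moreover have "z = (x + j) + y" using j by (simp add: algebra_simps)
    ultimately show "z \<in> {p + q | p q. p \<in> cos a x \<and> q \<in> cos a y}" by blast
  qed
qed

lemma cos_smul: "{p * r + j | p j. p \<in> cos a x \<and> inJ a j} = cos a (x * r)"
proof
  show "{p * r + j | p j. p \<in> cos a x \<and> inJ a j} \<subseteq> cos a (x * r)"
  proof
    fix z assume "z \<in> {p * r + j | p j. p \<in> cos a x \<and> inJ a j}"
    then obtain j k where "inJ a j" "inJ a k" "z = (x + j) * r + k" unfolding cos_def by auto
    then show "z \<in> cos a (x * r)" unfolding cos_def using inJ_add[OF inJ_mult[of a j r], of k]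
      by (auto simp: algebra_simps intro!: image_eqI[of _ _ "j * r + k"])
  qed
  show "cos a (x * r) \<subseteq> {p * r + j | p j. p \<in> cos a x \<and> inJ a j}"
  proof
    fix z assume "z \<in> cos a (x * r)"
    then obtain j where j: "inJ a j" "z = x * r + j" unfolding cos_def by auto
    have "x \<in> cos a x" unfolding cos_def using inJ_0[of a] by (auto intro: image_eqI[of _ _ 0])
    then show "z \<in> {p * r + j | p j. p \<in> cos a x \<and> inJ a j}" using j by blast
  qed
qed

lemma Q_simps:
  "rm_carrier (quotmod UNIV (set_plus_r (range ((*) a)) (rann a))) = range (cos a)"
  "rm_add (quotmod UNIV (set_plus_r (range ((*) a)) (rann a))) (cos a x) (cos a y) = cos a (x + y)"
  "rm_smul (quotmod UNIV (set_plus_r (range ((*) a)) (rann a))) (cos a x) r = cos a (x * r)"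
  unfolding quotmod_def J_char using cos_add[of a x y] cos_smul[where a=a and x=x and r=r]
  by (simp_all add: cos_def[symmetric] cong: image_cong)



definition Nm :: "('a::{ring,monoid_mult}, 'a set \<Rightarrow> 'a) rmod" where
  "Nm = \<lparr> rm_carrier = range (\<lambda>r. \<lambda>_. r), rm_add = (\<lambda>f g X. f X + g X),
          rm_zero = (\<lambda>_. 0), rm_smul = (\<lambda>f r X. f X * r) \<rparr>"

lemma Nm_mod: "rmodule (Nm :: ('a::{ring,monoid_mult}, 'a set \<Rightarrow> 'a) rmod)"
  unfolding rmodule_def Nm_def
  apply (simp add: algebra_simps)
  apply (intro allI)
  apply (rule_tac x="- x" in exI)
  apply simp
  done

lemma proj_t:
  fixes a :: "'a::{ring,monoid_mult}"
  assumes "rprojective (quotmod UNIV (set_plus_r (range ((*) a)) (rann a)))"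
  shows "\<exists>t. (\<forall>j. inJ a j \<longrightarrow> t * j = 0) \<and> inJ a (1 - t)"
proof -
  let ?Q = "quotmod UNIV (set_plus_r (range ((*) a)) (rann a))"
  define g :: "('a set \<Rightarrow> 'a) \<Rightarrow> 'a set" where "g f = cos a (f {})" for f
  have lin: "rlinear Nm ?Q g"
    unfolding rlinear_def g_def by (auto simp: Nm_def Q_simps)
  have surj: "g ` rm_carrier Nm = rm_carrier ?Q"
    unfolding g_def by (auto simp: Nm_def Q_simps)
  have P: "\<forall>(N :: ('a, 'a set \<Rightarrow> 'a) rmod) g.
        rmodule N \<and> rlinear N ?Q g \<and> g ` rm_carrier N = rm_carrier ?Q \<longrightarrow>
        (\<exists>h. rlinear ?Q N h \<and> (\<forall>x\<in>rm_carrier ?Q. g (h x) = x))"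
    using assms unfolding rprojective_def by (rule conjunct2)
  have "\<exists>h. rlinear ?Q Nm h \<and> (\<forall>x\<in>rm_carrier ?Q. g (h x) = x)"
    using P[rule_format, OF conjI[OF Nm_mod conjI[OF lin surj]]] .
  then obtain h where
    hl: "rlinear ?Q Nm h" and hs: "\<forall>x\<in>rm_carrier ?Q. g (h x) = x" by blast
  have hsm: "\<forall>X\<in>rm_carrier ?Q. \<forall>r. h (rm_smul ?Q X r) = rm_smul Nm (h X) r"
    using hl unfolding rlinear_def by (rule conjunct2[OF conjunct2])
  have "h (cos a 1) \<in> rm_carrier Nm" using hl unfolding rlinear_def by (auto simp: Q_simps)
  then obtain t where t: "h (cos a 1) = (\<lambda>_. t)" by (auto simp: Nm_def)
  have hx: "h (cos a x) = (\<lambda>_. t * x)" for x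
  proof -
    have "cos a x = rm_smul ?Q (cos a 1) x" by (simp add: Q_simps)
    then have "h (cos a x) = rm_smul Nm (h (cos a 1)) x"
      using hsm[rule_format, of "cos a 1" x] by (simp add: Q_simps)
    then show ?thesis using t by (simp add: Nm_def)
  qed
  have gx: "cos a (t * x) = cos a x" for x
    using hs[rule_format, of "cos a x"] hx[of x] by (simp add: Q_simps g_def)
  have "inJ a (t * 1 - 1)" using gx[of 1] cos_eq[of a "t*1" 1] by simp
  then have "inJ a (1 - t)" using inJ_neg[of a "t * 1 - 1"] by simp
  moreover have "t * j = 0" if "inJ a j" for j
  proof -
    have "cos a j = cos a 0" using that cos_eq[of a j 0] by simp
    then have "h (cos a j) = h (cos a 0)" by simp
    then have "(\<lambda>_::'a set. t * j) = (\<lambda>_. t * 0)" using hx[of j] hx[of 0] by simp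
    then have "t * j = t * 0" by (rule fun_cong)
    then show ?thesis by simp
  qed
  ultimately show ?thesis by blast
qed



lemma alg_facts:
  fixes a b c t u v :: "'a::{ring,monoid_mult}"
  assumes bdef: "b = a - a*a*a" and bc: "b = b*c*b"
    and tJ: "\<forall>j. inJ a j \<longrightarrow> t*j = 0" and tu: "1 - t = a*u + v" and av: "a*v = 0"
  shows ab: "a*b = b*a"
    and tt: "t*t = t"
    and F2: "\<And>x y. b*t*x = a*b*y \<Longrightarrow> t*x = 0"
    and F1: "\<And>y. b*y = b*t*(c*(b*y)) + a*b*u*c*(b*y)"
    and F3: "\<And>y. a*b*u*c*(a*b*y) = a*b*y"
proof -
  show ab: "a*b = b*a" unfolding bdef by (simp add: algebra_simps mult.assoc)
  have bv: "b*v = 0"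
  proof -
    have "b*v = a*v - a*a*(a*v)" unfolding bdef by (simp add: algebra_simps mult.assoc)
    then show ?thesis using av by simp
  qed
  have "inJ a (1 - t)" using tu av inJ_def by blast
  then have "t * (1 - t) = 0" using tJ by blast
  then show tt: "t*t = t" by (simp add: algebra_simps)
  have decomp: "b*y = b*t*y + a*b*u*y" for y
  proof -
    have "y = t*y + a*u*y + v*y"
    proof -
      have "(1 - t)*y = (a*u + v)*y" by (simp only: tu)
      then have "(1 - t)*y = a*u*y + v*y" by (simp add: algebra_simps)
      then have "y - t*y = a*u*y + v*y" by (simp add: algebra_simps)
      then show ?thesis by (simp add: algebra_simps)
    qed
    then have "b*y = b*(t*y + a*u*y + v*y)" by simp
    also have "\<dots> = b*t*y + (b*a)*u*y + (b*v)*y" by (simp add: algebra_simps mult.assoc)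
    also have "\<dots> = b*t*y + a*b*u*y" using bv ab by simp
    finally show ?thesis .
  qed
  show F2: "t*x = 0" if h: "b*t*x = a*b*y" for x y
  proof -
    define m where "m = (1 - a*a)*t*x - b*y"
    have ab1: "a*(1 - a*a) = b" unfolding bdef by (simp add: algebra_simps mult.assoc)
    have "a*m = (a*(1 - a*a))*t*x - a*b*y" unfolding m_def by (simp add: algebra_simps mult.assoc)
    also have "\<dots> = 0" using ab1 h by (simp add: mult.assoc)
    finally have "inJ a m" using inJ_ann by blast
    moreover have "inJ a (b*y)"
    proof -
      have "b*y = a*((1 - a*a)*y)" using ab1 by (metis mult.assoc)
      then show ?thesis using inJ_aR by metis
    qed
    moreover have "inJ a (a*(a*t*x))" by (rule inJ_aR)
    ultimately have "inJ a (m + b*y + a*(a*t*x))" using inJ_add by blast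
    moreover have "m + b*y + a*(a*t*x) = t*x" unfolding m_def by (simp add: algebra_simps mult.assoc)
    ultimately have "t*(t*x) = 0" using tJ by metis
    then show ?thesis using tt by (simp add: mult.assoc[symmetric])
  qed
  show F1: "b*y = b*t*(c*(b*y)) + a*b*u*c*(b*y)" for y
  proof -
    have "b*y = b*(c*(b*y))" using bc by (metis mult.assoc)
    also have "\<dots> = b*t*(c*(b*y)) + a*b*u*(c*(b*y))" by (rule decomp)
    finally show ?thesis by (simp add: mult.assoc)
  qed
  show "a*b*u*c*(a*b*y) = a*b*y" for y
  proof -
    have e: "a*b*y = b*(a*y)" using ab by (simp add: mult.assoc)
    have "a*b*y = b*t*(c*(a*b*y)) + a*b*u*c*(a*b*y)" using F1[of "a*y"] e by simp
    then have "b*t*(c*(a*b*y)) = a*b*(y - u*c*(a*b*y))"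
      by (simp add: algebra_simps mult.assoc)
    then have "t*(c*(a*b*y)) = 0" using F2 by blast
    then have "b*t*(c*(a*b*y)) = 0" by (simp add: mult.assoc)
    then show ?thesis using \<open>a*b*y = b*t*(c*(a*b*y)) + a*b*u*c*(a*b*y)\<close> by simp
  qed
qed



lemma Kchar:
  fixes a :: "'a::{ring,monoid_mult}"
  shows "a_rann_sq a = {z. z \<in> range ((*) (a - a*a*a)) \<and> a*z = 0}"
proof
  show "a_rann_sq a \<subseteq> {z. z \<in> range ((*) (a - a*a*a)) \<and> a*z = 0}"
  proof
    fix z assume "z \<in> a_rann_sq a"
    then obtain y where y: "z = a*y" "a*a*y = 0" unfolding a_rann_sq_def rann_def by auto
    have "(a - a*a*a)*y = a*y - a*(a*a*y)" by (simp add: algebra_simps mult.assoc)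
    then have "z = (a - a*a*a)*y" using y by simp
    moreover have "a*z = 0" using y by (simp add: mult.assoc)
    ultimately show "z \<in> {z. z \<in> range ((*) (a - a*a*a)) \<and> a*z = 0}" by auto
  qed
  show "{z. z \<in> range ((*) (a - a*a*a)) \<and> a*z = 0} \<subseteq> a_rann_sq a"
  proof
    fix z assume "z \<in> {z. z \<in> range ((*) (a - a*a*a)) \<and> a*z = 0}"
    then obtain y where y: "z = (a - a*a*a)*y" "a*z = 0" by auto
    have e1: "z = a*((1 - a*a)*y)" using y by (simp add: algebra_simps mult.assoc)
    have "a*a*((1 - a*a)*y) = a*z" using e1 by (simp add: mult.assoc)
    then have "(1 - a*a)*y \<in> rann (a*a)" using y unfolding rann_def by simp
    then show "z \<in> a_rann_sq a" unfolding a_rann_sq_def using e1 by blast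
  qed
qed

theorem lemma3p3:
  fixes a :: "'a::{ring,monoid_mult}"
  assumes "exchange_ring TYPE('a)"
    and "\<exists>u::'a. (1 + 1) * u = 1 \<and> u * (1 + 1) = 1"
    and "regular (a - a * a * a)"
    and "rprojective (quotmod (range ((*) a)) (a_rann_sq a))"
    and "rprojective (quotmod UNIV (set_plus_r (range ((*) a)) (rann a)))"
  shows "riso (dsum (submod (range ((*) (a - a * a * a)))) (submod (a_rann_sq a)))
              (dsum (submod (range ((*) (a - a * a * a))))
                    (quotmod UNIV (set_plus_r (range ((*) a)) (rann a))))"
proof -
  define b where "b = a - a*a*a"
  let ?Q = "quotmod UNIV (set_plus_r (range ((*) a)) (rann a))"
  obtain c where bc: "b = b*c*b" using assms(3) unfolding regular_def b_def by blast
  obtain t where tJ: "\<forall>j. inJ a j \<longrightarrow> t*j = 0" and t1: "inJ a (1 - t)"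
    using proj_t[OF assms(5)] by blast
  obtain u v where tu: "1 - t = a*u + v" and av: "a*v = 0" using t1 unfolding inJ_def by blast
  note facts = alg_facts[OF b_def bc tJ tu av]
  have K: "a_rann_sq a = {z. z \<in> range ((*) b) \<and> a*z = 0}" using Kchar[of a] b_def by simp
  define g where "g = a*b*u*c"
  define F where "F p = (b*u*c*(g*fst p) + snd p, cos a (c * fst p))" for p
  define G where "G q = (a*fst q + b*t*(SOME x. x \<in> snd q), fst q - b*u*c*(a*fst q))" for q
  let ?M = "dsum (submod (range ((*) b))) (submod (a_rann_sq a))"
  let ?N = "dsum (submod (range ((*) b))) ?Q"
  have carM: "rm_carrier ?M = range ((*) b) \<times> {z. z \<in> range ((*) b) \<and> a*z = 0}"
    by (simp add: dsum_def submod_def K)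
  have carN: "rm_carrier ?N = range ((*) b) \<times> range (cos a)"
    by (simp add: dsum_def submod_def Q_simps)
  have lin: "rlinear ?M ?N F"
    unfolding rlinear_def
  proof (intro conjI ballI allI)
    fix p assume "p \<in> rm_carrier ?M"
    then obtain y y' where p: "fst p = b*y" "snd p = b*y'" using carM by auto
    have "b*u*c*(g*fst p) + snd p = b*(u*c*(g*fst p) + y')" using p by (simp add: algebra_simps mult.assoc)
    then show "F p \<in> rm_carrier ?N" unfolding carN F_def by auto
  next
    fix p q assume "p \<in> rm_carrier ?M" "q \<in> rm_carrier ?M"
    show "F (rm_add ?M p q) = rm_add ?N (F p) (F q)"
      by (simp add: dsum_def submod_def F_def case_prod_beta Q_simps algebra_simps)
  next
    fix p r assume "p \<in> rm_carrier ?M"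
    show "F (rm_smul ?M p r) = rm_smul ?N (F p) r"
      by (simp add: dsum_def submod_def F_def case_prod_beta Q_simps algebra_simps mult.assoc)
  qed
  have ab: "a*b = b*a" and tt: "t*t = t"
    and F2: "\<And>x y. b*t*x = a*b*y \<Longrightarrow> t*x = 0"
    and F1: "\<And>y. b*y = b*t*(c*(b*y)) + a*b*u*c*(b*y)"
    and F3: "\<And>y. a*b*u*c*(a*b*y) = a*b*y" using facts by blast+
  have cost: "cos a (t*w) = cos a w" for w
  proof -
    have "inJ a ((1 - t)*w)" using t1 inJ_mult by blast
    then have "inJ a (w - t*w)" by (simp add: algebra_simps)
    then show ?thesis using cos_eq by (metis inJ_neg minus_diff_eq)
  qed
  have some: "t*(SOME x. x \<in> cos a x0) = t*x0" for x0
  proof -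
    have "x0 \<in> cos a x0" unfolding cos_def using inJ_0[of a] by (auto intro: image_eqI[of _ _ 0])
    then have "(SOME x. x \<in> cos a x0) \<in> cos a x0" by (rule someI)
    then obtain j where j: "inJ a j" "(SOME x. x \<in> cos a x0) = x0 + j" unfolding cos_def by auto
    then show ?thesis using tJ by (simp add: algebra_simps)
  qed
  have gg: "g*(g*(b*y)) = g*(b*y)" for y
  proof -
    have "g*(b*y) = a*b*(u*c*b*y)" unfolding g_def by (simp add: mult.assoc)
    then show ?thesis using F3[of "u*c*b*y"] unfolding g_def by simp
  qed
  have bij: "bij_betw F (rm_carrier ?M) (rm_carrier ?N)"
  proof (rule bij_betw_byWitness[where f'=G])
    show "\<forall>p\<in>rm_carrier ?M. G (F p) = p"
    proof
      fix p assume "p \<in> rm_carrier ?M"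
      then obtain y k where p: "p = (b*y, k)" "a*k = 0" using carM by auto
      let ?w = "b*u*c*(g*(b*y)) + k"
      have aw: "a*?w = g*(b*y)"
      proof -
        have "a*?w = g*(g*(b*y)) + a*k" unfolding g_def by (simp add: algebra_simps mult.assoc)
        then show ?thesis using gg p by simp
      qed
      have "G (F p) = (a*?w + b*t*(SOME x. x \<in> cos a (c*(b*y))), ?w - b*u*c*(a*?w))"
        unfolding G_def F_def p by simp
      also have "\<dots> = (g*(b*y) + b*t*(c*(b*y)), k)" using aw some[of "c*(b*y)"] by (simp add: mult.assoc)
      also have "\<dots> = p" using F1[of y] p unfolding g_def by (simp add: add.commute)
      finally show "G (F p) = p" .
    qed
    show "\<forall>q\<in>rm_carrier ?N. F (G q) = q"
    proof
      fix q assume "q \<in> rm_carrier ?N"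
      then obtain y x0 where q: "q = (b*y, cos a x0)" using carN by auto
      define x where "x = (SOME x. x \<in> cos a x0)"
      have tx: "t*x = t*x0" unfolding x_def by (rule some)
      define z where "z = a*(b*y) + b*t*x"
      have z: "z = b*(a*y + t*x)"
      proof -
        have "a*(b*y) = b*(a*y)" using ab by (metis mult.assoc)
        then show ?thesis unfolding z_def by (simp add: distrib_left mult.assoc)
      qed
      have e1: "z = b*t*(c*z) + g*z" using F1[of "a*y + t*x"] z unfolding g_def by simp
      have e3: "b*t*(c*z) = z - g*z" using e1 by (metis add_diff_cancel_right')
      have e4: "b*t*x = z - a*(b*y)" unfolding z_def by simp
      have "b*t*(c*z - x) = b*t*(c*z) - b*t*x" by (simp add: right_diff_distrib)
      also have "\<dots> = a*(b*y) - g*z" using e3 e4 by simp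
      also have "\<dots> = a*b*(y - u*c*z)" unfolding g_def by (simp add: algebra_simps)
      finally have "t*(c*z - x) = 0" using F2 by blast
      then have tcz: "t*(c*z) = t*x" by (simp add: right_diff_distrib)
      have gz: "g*z = a*(b*y)"
      proof -
        have "b*t*(c*z) = b*t*x" using tcz by (simp add: mult.assoc)
        then show ?thesis using e3 e4 by simp
      qed
      have "G q = (z, b*y - b*u*c*(a*(b*y)))" unfolding G_def q z_def x_def by simp
      then have "F (G q) = (b*u*c*(a*(b*y)) + (b*y - b*u*c*(a*(b*y))), cos a (c*z))"
        unfolding F_def using gz by simp
      also have "\<dots> = (b*y, cos a x0)"
        using cost[of "c*z"] cost[of x0] tcz tx by simp
      finally show "F (G q) = q" using q by simp
    qed
    show "F ` rm_carrier ?M \<subseteq> rm_carrier ?N" using lin unfolding rlinear_def by blast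
    show "G ` rm_carrier ?N \<subseteq> rm_carrier ?M"
    proof
      fix p assume "p \<in> G ` rm_carrier ?N"
      then obtain y x0 where p: "p = G (b*y, cos a x0)" using carN by auto
      define x where "x = (SOME x. x \<in> cos a x0)"
      have p2: "p = (b*(a*y + t*x), b*(y - u*c*(a*(b*y))))"
      proof -
        have "a*(b*y) = b*(a*y)" using ab by (metis mult.assoc)
        then show ?thesis unfolding p G_def x_def by (simp add: algebra_simps)
      qed
      have "a*(b*(y - u*c*(a*(b*y)))) = a*b*y - a*b*u*c*(a*b*y)"
        by (simp add: algebra_simps mult.assoc)
      also have "\<dots> = 0" using F3[of y] by simp
      finally show "p \<in> rm_carrier ?M" unfolding carM p2 by auto
    qed
  qed
  have "riso ?M ?N" unfolding riso_def using lin bij by blast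
  then show ?thesis unfolding b_def .
qed

end
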